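(* Let $(a_j)_{j\ge1}$ be a bounded sequence of nonnegative integers. If there exists a positive integer $q$ such that $a_j\le a_{j+q}$ for all $j\geq1$, then $(a_j)_{j\ge1}$ is strongly eventually periodic.
   Context: A sequence $(a_j)_{j\ge1}$ of integers is strongly eventually periodic (SEP) if there exist a positive integer $p$, a finite sequence of integers $(b_\ell)_{\ell=1}^p$ and a finite sequence of nonnegative integers $(c_\ell)_{\ell=1}^p$ such that $(a_j)_{j\ge1}$ equals $b_1,\ldots,b_p$ followed by the infinite repetition of $b_1+c_1,\ldots,b_p+c_p$. *)

theory Defs
  imports Main
begin

text \<open>A sequence (a_j)_{j>=1} of integers, represented as a function nat => int whose
  value at 0 is ignored, is strongly eventually periodic (SEP) if there exist p > 0,
  integers b_1..b_p and nonnegative integers c_1..c_p such that the sequence is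
  b_1,...,b_p followed by the infinite repetition of b_1+c_1,...,b_p+c_p.\<close>
definition SEP :: "(nat \<Rightarrow> int) \<Rightarrow> bool" where
  "SEP a \<longleftrightarrow> (\<exists>p::nat. p > 0 \<and> (\<exists>b c :: nat \<Rightarrow> int.
      (\<forall>l\<in>{1..p}. c l \<ge> 0) \<and>
      (\<forall>j\<in>{1..p}. a j = b j) \<and>
      (\<forall>j>p. a j = b ((j - 1) mod p + 1) + c ((j - 1) mod p + 1))))"

end

theory Submission
  imports Defs
begin

lemma mono_q:
  fixes a :: "nat \<Rightarrow> int"
  assumes "\<forall>j\<ge>1. a j \<le> a (j + q)" "j \<ge> 1"
  shows "a j \<le> a (j + k*q)"
proof (induction k)
  case 0 then show ?case by simp
next
  case (Suc k)
  have "a (j + k*q) \<le> a (j + k*q + q)" using assms by simp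
  then show ?case using Suc by (simp add: algebra_simps)
qed

lemma stab_one:
  fixes a :: "nat \<Rightarrow> int"
  assumes m: "\<forall>j\<ge>1. a j \<le> a (j + q)" and nn: "\<forall>j\<ge>1. a j \<ge> 0"
    and bd: "\<forall>j\<ge>1. a j \<le> B" and j: "j \<ge> 1"
  shows "\<exists>K. \<forall>k\<ge>K. a (j + k*q) = a (j + K*q)"
proof -
  let ?V = "(\<lambda>k. a (j + k*q)) ` UNIV"
  have sub: "?V \<subseteq> {0..B}" using nn bd j by auto
  hence fin: "finite ?V" by (rule finite_subset) simp
  have "Max ?V \<in> ?V" using fin by (intro Max_in) auto
  then obtain k0 where k0: "a (j + k0*q) = Max ?V" by auto
  show ?thesis
  proof (intro exI allI impI)
    fix k assume "k0 \<le> k"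
    then obtain d where d: "k = k0 + d" using le_Suc_ex by blast
    have "a (j + k0*q) \<le> a (j + k0*q + d*q)" using mono_q[OF m, of "j + k0*q" d] j by simp
    hence "a (j + k0*q) \<le> a (j + k*q)" by (simp add: d algebra_simps)
    moreover have "a (j + k*q) \<le> Max ?V" using fin by auto
    ultimately show "a (j + k*q) = a (j + k0*q)" using k0 by simp
  qed
qed

lemma divhelp: "(0::nat) < q \<Longrightarrow> (q*Km + (q - 1)) div q = Km"
proof -
  assume qp: "0 < q"
  have "(q - 1 + Km*q) div q = Km + (q - 1) div q" using qp by (intro div_mult_self1) simp
  moreover have "(q - 1) div q = 0" using qp by (intro div_less) simp
  ultimately show ?thesis by (simp add: add.commute mult.commute)
qed

theorem lemma5p2:
  fixes a :: "nat \<Rightarrow> int"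
  assumes nonneg: "\<forall>j\<ge>1. a j \<ge> 0"
    and bounded: "\<exists>B. \<forall>j\<ge>1. a j \<le> B"
    and q: "\<exists>q::nat. q > 0 \<and> (\<forall>j\<ge>1. a j \<le> a (j + q))"
  shows "SEP a"
proof -
  obtain B where B: "\<forall>j\<ge>1. a j \<le> B" using bounded by blast
  obtain q where qp: "q > 0" and m: "\<forall>j\<ge>1. a j \<le> a (j + q)" using q by blast
  have "\<forall>j. \<exists>K. j \<ge> 1 \<longrightarrow> (\<forall>k\<ge>K. a (j + k*q) = a (j + K*q))"
    using stab_one[OF m nonneg B] by blast
  then obtain K where K: "\<And>j k. j \<ge> 1 \<Longrightarrow> k \<ge> K j \<Longrightarrow> a (j + k*q) = a (j + K j * q)"
    by metis
  define Km where "Km = Max (K ` {1..q})"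
  define N where "N = q + q*Km"
  have per: "a (x + q) = a x" if x: "x \<ge> N" for x
  proof -
    define r where "r = (x - 1) mod q + 1"
    define k where "k = (x - 1) div q"
    have r1: "r \<ge> 1" "r \<le> q" using qp by (auto simp: r_def Suc_leI)
    have "x - 1 = k*q + (x - 1) mod q" unfolding k_def by simp
    moreover have "x \<ge> 1" using x qp unfolding N_def by simp
    ultimately have xe: "x = r + k*q" unfolding r_def by linarith
    have "K r \<le> Km" unfolding Km_def using r1 by (intro Max_ge) auto
    moreover have "Km \<le> k"
    proof -
      have "q*Km + (q - 1) \<le> x - 1" using x qp unfolding N_def by simp
      hence "(q*Km + (q - 1)) div q \<le> (x - 1) div q" by (rule div_le_mono)
      moreover have "(q*Km + (q - 1)) div q = Km" using qp by (rule divhelp)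
      ultimately show ?thesis unfolding k_def by simp
    qed
    ultimately have "K r \<le> k" by simp
    have "a (r + k*q) = a (r + K r * q)" using K r1 \<open>K r \<le> k\<close> by blast
    moreover have "a (r + Suc k*q) = a (r + K r * q)" using K[of r "Suc k"] r1 \<open>K r \<le> k\<close> by linarith
    ultimately show ?thesis using xe by (simp add: algebra_simps)
  qed
  have perk: "a (x + t*q) = a x" if "x \<ge> N" for x t
  proof (induction t)
    case 0 then show ?case by simp
  next
    case (Suc t)
    have "a (x + t*q + q) = a (x + t*q)" using per that by simp
    then show ?case using Suc by (simp add: algebra_simps)
  qed
  define p where "p = q * Suc N"
  have pp: "p > 0" using qp by (simp add: p_def)
  have "1 * Suc N \<le> q * Suc N" using qp by (intro mult_le_mono1) simp
  hence pN: "p \<ge> N + 1" unfolding p_def by simp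
  show ?thesis unfolding SEP_def
  proof (intro exI conjI ballI allI impI)
    show "p > 0" by (rule pp)
    show "a j = a j" for j ..
    show "0 \<le> a (l + p) - a l" if "l \<in> {1..p}" for l
      using mono_q[OF m, of l "Suc N"] that by (simp add: p_def mult.commute)
    fix j assume jp: "p < j"
    define r where "r = (j - 1) mod p + 1"
    define k where "k = (j - 1) div p"
    have "p div p \<le> (j - 1) div p" using jp by (intro div_le_mono) simp
    hence k1: "k \<ge> 1" using pp unfolding k_def by simp
    have "j - 1 = k*p + (j - 1) mod p" unfolding k_def by simp
    hence je: "j = r + k*p" using jp unfolding r_def by linarith
    obtain k' where k': "k = Suc k'" using k1 by (cases k) auto
    have "j = (r + p) + ((k - 1) * Suc N) * q"
      using je by (simp add: k' p_def algebra_simps)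
    hence "a j = a (r + p)" using perk[of "r + p" "(k - 1) * Suc N"] pN by simp
    thus "a j = a ((j - 1) mod p + 1) + (a ((j - 1) mod p + 1 + p) - a ((j - 1) mod p + 1))"
      unfolding r_def by simp
  qed
qed

end
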